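(* Let $X$ be a non-empty set and let $I,\Phi:X\to\mathbb{R}$ and $\mu>0$ be such that the function $I-\mu\Phi$ has a global minimum in $X$. Then at least one of the following assertions holds: (a) for each filtering cover $\mathcal{N}$ of $X$ there exists $A\in\mathcal{N}$ such that $$\sup_{\lambda\in\mathbb{R}}\inf_{x\in A}\big(I(x)-\mu(e^{\Phi(x)-\lambda}+\lambda)\big)<\inf_{x\in A}\sup_{\lambda\in\Phi(A)}\big(I(x)-\mu(e^{\Phi(x)-\lambda}+\lambda)\big);$$ (b) for each global minimum $u$ of $I-\mu\Phi$ one has $$I(u)\leq I(x)-\mu\big(e^{\Phi(x)-\Phi(u)}-1\big)$$ for all $x\in X$.
   Context: A family $\mathcal{N}$ of non-empty subsets of $X$ is a filtering cover of $X$ if $\bigcup_{A\in\mathcal{N}}A=X$ and for each $A_1,A_2\in\mathcal{N}$ there is $A_3\in\mathcal{N}$ with $A_1\cup A_2\subseteq A_3$. *)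

theory Defs
  imports "HOL-Analysis.Analysis"
begin

definition filtering_cover :: "'a set set \<Rightarrow> 'a set \<Rightarrow> bool" where
  "filtering_cover N X \<longleftrightarrow>
     (\<forall>A\<in>N. A \<noteq> {} \<and> A \<subseteq> X) \<and> \<Union>N = X \<and>
     (\<forall>A1\<in>N. \<forall>A2\<in>N. \<exists>A3\<in>N. A1 \<union> A2 \<subseteq> A3)"

definition is_global_min_on :: "'a set \<Rightarrow> ('a \<Rightarrow> real) \<Rightarrow> 'a \<Rightarrow> bool" where
  "is_global_min_on X f u \<longleftrightarrow> u \<in> X \<and> (\<forall>x\<in>X. f u \<le> f x)"

end

theory Submission
  imports Defs
begin

lemma hpos: "(s::real) \<noteq> 0 \<Longrightarrow> exp s - 1 - s > 0"
  by (smt (verit, best) exp_minus_greater)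

lemma hbound:
  fixes s e :: real
  assumes "e > 0" "\<bar>s\<bar> \<ge> e"
  shows "exp s - 1 - s \<ge> min (exp e - 1 - e) (exp (-e) - 1 + e)"
proof (cases "s \<ge> 0")
  case True
  hence "s \<ge> e" using assms by simp
  have "exp s = exp e * exp (s - e)" by (simp flip: exp_add)
  also have "\<dots> \<ge> exp e * (1 + (s - e))" by (intro mult_left_mono) auto
  finally have "exp s - 1 - s \<ge> (exp e - 1 - e) + (s - e) * (exp e - 1)"
    by (simp add: algebra_simps)
  moreover have "(s - e) * (exp e - 1) \<ge> 0" using \<open>s \<ge> e\<close> assms(1)
    using exp_gt_one[OF assms(1)] by simp
  ultimately show ?thesis by linarith
next
  case False
  hence "s \<le> -e" using assms by simp
  have "exp s = exp (-e) * exp (s + e)" by (simp flip: exp_add)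
  also have "\<dots> \<ge> exp (-e) * (1 + (s + e))" by (intro mult_left_mono) auto
  finally have "exp s - 1 - s \<ge> (exp (-e) - 1 + e) + (s + e) * (exp (-e) - 1)"
    by (simp add: algebra_simps)
  moreover have "exp (-e) \<le> 1" using assms(1) by simp
  hence "(s + e) * (exp (-e) - 1) \<ge> 0" using \<open>s \<le> -e\<close>
    by (intro mult_nonpos_nonpos) auto
  ultimately show ?thesis by linarith
qed

theorem theorem3p6:
  fixes X :: "'a set" and I \<Phi> :: "'a \<Rightarrow> real" and \<mu> :: real
  assumes "X \<noteq> {}" and "\<mu> > 0"
    and "\<exists>u. is_global_min_on X (\<lambda>x. I x - \<mu> * \<Phi> x) u"
  shows "(\<forall>N. filtering_cover N X \<longrightarrow>
            (\<exists>A\<in>N.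
               (SUP t::real. INF x\<in>A. ereal (I x - \<mu> * (exp (\<Phi> x - t) + t)))
               < (INF x\<in>A. SUP t\<in>\<Phi> ` A. ereal (I x - \<mu> * (exp (\<Phi> x - t) + t)))))
         \<or> (\<forall>u. is_global_min_on X (\<lambda>x. I x - \<mu> * \<Phi> x) u \<longrightarrow>
              (\<forall>x\<in>X. I u \<le> I x - \<mu> * (exp (\<Phi> x - \<Phi> u) - 1)))"
proof (rule disjCI)
  assume "\<not> (\<forall>u. is_global_min_on X (\<lambda>x. I x - \<mu> * \<Phi> x) u \<longrightarrow>
              (\<forall>x\<in>X. I u \<le> I x - \<mu> * (exp (\<Phi> x - \<Phi> u) - 1)))"
  then obtain u x where gm: "is_global_min_on X (\<lambda>x. I x - \<mu> * \<Phi> x) u" and x: "x \<in> X"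
    and bad: "I u > I x - \<mu> * (exp (\<Phi> x - \<Phi> u) - 1)" by force
  have uX: "u \<in> X" and umin: "\<And>y. y \<in> X \<Longrightarrow> I u - \<mu> * \<Phi> u \<le> I y - \<mu> * \<Phi> y"
    using gm unfolding is_global_min_on_def by auto
  define f where "f y t = I y - \<mu> * (exp (\<Phi> y - t) + t)" for y t
  define m where "m = I u - \<mu> * \<Phi> u"
  define \<delta> where "\<delta> = m - \<mu> - f x (\<Phi> u)"
  have \<delta>: "\<delta> > 0" using bad unfolding \<delta>_def m_def f_def by (simp add: algebra_simps)
  have fu: "f u t = m - \<mu> - \<mu> * (exp (\<Phi> u - t) - 1 - (\<Phi> u - t))" for t
    unfolding f_def m_def by (simp add: algebra_simps)
  have "isCont (f x) (\<Phi> u)" unfolding f_def by (intro continuous_intros)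
  then obtain e where e: "e > 0" and ee: "\<And>t. dist t (\<Phi> u) < e \<Longrightarrow> dist (f x t) (f x (\<Phi> u)) < \<delta>/2"
    unfolding continuous_at_eps_delta using \<delta> by (meson half_gt_zero)
  define c where "c = min (exp e - 1 - e) (exp (-e) - 1 + e)"
  have c: "c > 0" unfolding c_def using hpos[of e] hpos[of "-e"] e by auto
  define \<eta> where "\<eta> = min (\<delta>/2) (\<mu> * c)"
  have \<eta>: "\<eta> > 0" unfolding \<eta>_def using \<delta> c assms(2) by auto
  have key: "min (f u t) (f x t) \<le> m - \<mu> - \<eta>" for t
  proof (cases "\<bar>t - \<Phi> u\<bar> < e")
    case True
    then have "dist (f x t) (f x (\<Phi> u)) < \<delta>/2" using ee by (simp add: dist_real_def)
    hence "f x t < m - \<mu> - \<delta>/2" unfolding dist_real_def using abs_ge_self[of "f x t - f x (\<Phi> u)"] \<delta>_def by linarith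
    then show ?thesis unfolding \<eta>_def by linarith
  next
    case False
    hence "exp (\<Phi> u - t) - 1 - (\<Phi> u - t) \<ge> c" unfolding c_def
      using hbound[OF e, of "\<Phi> u - t"] by auto
    hence "\<mu> * (exp (\<Phi> u - t) - 1 - (\<Phi> u - t)) \<ge> \<mu> * c"
      using assms(2) by (intro mult_left_mono) auto
    hence "f u t \<le> m - \<mu> - \<mu> * c" using fu[of t] by linarith
    then show ?thesis unfolding \<eta>_def by linarith
  qed
  show "\<forall>N. filtering_cover N X \<longrightarrow>
            (\<exists>A\<in>N.
               (SUP t::real. INF x\<in>A. ereal (I x - \<mu> * (exp (\<Phi> x - t) + t)))
               < (INF x\<in>A. SUP t\<in>\<Phi> ` A. ereal (I x - \<mu> * (exp (\<Phi> x - t) + t))))"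
  proof (intro allI impI)
    fix N assume N: "filtering_cover N X"
    have "\<Union>N = X" using N unfolding filtering_cover_def by auto
    then obtain A1 A2 where A1: "A1 \<in> N" "x \<in> A1" and A2: "A2 \<in> N" "u \<in> A2"
      using x uX by blast
    then obtain A where A: "A \<in> N" "A1 \<union> A2 \<subseteq> A"
      using N unfolding filtering_cover_def by meson
    have AX: "A \<subseteq> X" using N A(1) unfolding filtering_cover_def by auto
    have xA: "x \<in> A" and uA: "u \<in> A" using A A1 A2 by auto
    have L: "(SUP t::real. INF y\<in>A. ereal (f y t)) \<le> ereal (m - \<mu> - \<eta>)"
    proof (rule SUP_least)
      fix t :: real
      have "(INF y\<in>A. ereal (f y t)) \<le> ereal (min (f u t) (f x t))"
        using uA xA by (simp add: INF_lower2 min_def)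
      also have "\<dots> \<le> ereal (m - \<mu> - \<eta>)" using key[of t] by (simp add: min_def split: if_splits)
      finally show "(INF y\<in>A. ereal (f y t)) \<le> ereal (m - \<mu> - \<eta>)" .
    qed
    have R: "ereal (m - \<mu>) \<le> (INF y\<in>A. SUP t\<in>\<Phi> ` A. ereal (f y t))"
    proof (rule INF_greatest)
      fix y assume yA: "y \<in> A"
      have "ereal (m - \<mu>) \<le> ereal (f y (\<Phi> y))"
        using umin[of y] yA AX unfolding f_def m_def by (auto simp add: algebra_simps)
      also have "\<dots> \<le> (SUP t\<in>\<Phi> ` A. ereal (f y t))"
        using yA by (intro SUP_upper) auto
      finally show "ereal (m - \<mu>) \<le> (SUP t\<in>\<Phi> ` A. ereal (f y t))" .
    qed
    have "ereal (m - \<mu> - \<eta>) < ereal (m - \<mu>)" using \<eta> by simp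
    with L R have "(SUP t::real. INF y\<in>A. ereal (f y t)) < (INF y\<in>A. SUP t\<in>\<Phi> ` A. ereal (f y t))"
      by (meson le_less_trans less_le_trans)
    then show "\<exists>A\<in>N. (SUP t::real. INF x\<in>A. ereal (I x - \<mu> * (exp (\<Phi> x - t) + t)))
               < (INF x\<in>A. SUP t\<in>\<Phi> ` A. ereal (I x - \<mu> * (exp (\<Phi> x - t) + t)))"
      using A(1) unfolding f_def by blast
  qed
qed

end
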